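(* Let $\bm{f}(\bm{y})=A\bm{y}+\bm{g}(\bm{y})$ with $A\in\mathbb{R}^{n\times n}$ and $\bm{g}:\mathbb{R}^n\to\mathbb{R}^n$ twice differentiable, fix $\hat{\bm{y}}^n\in\mathbb{R}^n$, and let $u\in(0,1]$ be a roundoff unit. For $\Delta t>0$ let $\hat{\bm{d}}_j\in\mathbb{R}^n$ satisfy $\|\hat{\bm{d}}_j\|_2\le C\Delta t$, set $\delta=\sqrt{u}/\Delta t$, and define $$\hat\Delta\bm{f}_j=\hat A\hat{\bm{d}}_j+\delta^{-1}\big(\hat{\bm{g}}(\hat{\bm{y}}^n+\delta\hat{\bm{d}}_j)-\bm{g}(\hat{\bm{y}}^n)\big),$$ where $\hat A\hat{\bm{d}}_j=(A+\Delta A_j)\hat{\bm{d}}_j$ with $\|\Delta A_j\|_2\le Cu\|A\|_2$, and $\hat{\bm{g}}$ is a low-precision evaluation of $\bm{g}$ satisfying $\|\hat{\bm{g}}(\bm{x})-\bm{g}(\bm{x})\|_2\le Cu$. Then $$\hat\Delta\bm{f}_j=\bm{f}(\hat{\bm{y}}^n+\hat{\bm{d}}_j)-\bm{f}(\hat{\bm{y}}^n)+O(\sqrt{u}\,\Delta t+\Delta t^2),$$ with the implied constant independent of $u$ and $\Delta t$.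
   Context: Here $C$ denotes generic positive constants depending only on $\bm{f}$ (not on $u$ or $\Delta t$). High-precision evaluations (such as $\bm{g}(\hat{\bm{y}}^n)$) are assumed exact; low-precision operations are modeled by the stated perturbations. *)

theory Defs
  imports "HOL-Analysis.Analysis"
begin

end

theory Submission
  imports Defs "HOL-Analysis.Analysis"
begin

lemma onorm_mat_le:
  fixes M :: "real^'n^'m"
  shows "onorm ((*v) M) \<le> real CARD('m) * real CARD('n) * norm M"
  apply (rule onorm_le_matrix_component)
proof -
  fix i j
  have "\<bar>M $ i $ j\<bar> \<le> norm (M $ i)" by (rule component_le_norm_cart)
  also have "\<dots> \<le> norm M" by (rule Finite_Cartesian_Product.norm_nth_le)
  finally show "\<bar>M $ i $ j\<bar> \<le> norm M" .
qed

lemma quad_bound: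
  fixes g :: "real^'n \<Rightarrow> real^'n" and J :: "real^'n \<Rightarrow> real^'n^'n"
  assumes dg: "\<And>x. (g has_derivative (\<lambda>h. J x *v h)) (at x)"
    and dJ: "J differentiable (at y)"
  shows "\<exists>M. \<forall>h. norm h \<le> R \<longrightarrow> norm (g (y + h) - g y - J y *v h) \<le> M * (norm h)\<^sup>2"
proof -
  define c where "c = real CARD('n) * real CARD('n)"
  have c0: "c \<ge> 0" unfolding c_def by simp
  obtain J' where J': "(J has_derivative J') (at y)" using dJ unfolding differentiable_def by blast
  then have blJ: "bounded_linear J'" by (rule has_derivative_bounded_linear)
  obtain KJ where KJ: "KJ > 0" "\<And>v. norm (J' v) \<le> norm v * KJ"
    using bounded_linear.pos_bounded[OF blJ] by blast
  obtain r where r: "r > 0" "\<And>x. norm (x - y) < r \<Longrightarrow> norm (J x - J y - J' (x - y)) \<le> 1 * norm (x - y)"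
    using J' unfolding has_derivative_at_alt by (meson zero_less_one)
  have Jlip: "norm (J x - J y) \<le> (KJ + 1) * norm (x - y)" if "norm (x - y) < r" for x
  proof -
    have "norm (J x - J y) \<le> norm (J x - J y - J' (x - y)) + norm (J' (x - y))"
      by (metis diff_add_cancel norm_triangle_ineq)
    also have "\<dots> \<le> norm (x - y) + norm (x - y) * KJ" using r(2)[OF that] KJ(2)[of "x - y"] by simp
    finally show ?thesis by (simp add: algebra_simps)
  qed
  define Q where "Q h = norm (g (y + h) - g y - J y *v h)" for h
  have near: "Q h \<le> c * (KJ + 1) * (norm h)\<^sup>2" if "norm h < r" for h
  proof -
    have "norm (g (y + h) - g y - J y *v (y + h - y)) \<le> norm (y + h - y) * (c * (KJ + 1) * norm h)"
    proof (rule differentiable_bound_linearization[where S="cball y (norm h)" and f'="\<lambda>x v. J x *v v"])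
      fix t :: real assume "t \<in> {0..1}"
      then show "y + t *\<^sub>R (y + h - y) \<in> cball y (norm h)"
        by (auto simp: dist_norm intro: mult_left_le_one_le)
    next
      fix x assume "x \<in> cball y (norm h)"
      show "(g has_derivative (*v) (J x)) (at x within cball y (norm h))"
        using dg[of x] has_derivative_at_withinI by (metis eta_contract_eq)
    next
      fix x assume x: "x \<in> cball y (norm h)"
      then have nx: "norm (x - y) \<le> norm h" by (simp add: dist_norm norm_minus_commute)
      have "(\<lambda>v. J x *v v) - (\<lambda>v. J y *v v) = (*v) (J x - J y)"
        by (auto simp: fun_diff_def matrix_vector_mult_diff_rdistrib)
      then have "onorm ((\<lambda>v. J x *v v) - (\<lambda>v. J y *v v)) \<le> c * norm (J x - J y)"
        using onorm_mat_le[of "J x - J y"] by (simp add: c_def)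
      also have "\<dots> \<le> c * ((KJ + 1) * norm (x - y))"
        using Jlip[of x] nx that c0 by (intro mult_left_mono) auto
      also have "\<dots> \<le> c * ((KJ + 1) * norm h)"
        using nx c0 KJ by (intro mult_left_mono) auto
      finally show "onorm ((\<lambda>v. J x *v v) - (\<lambda>v. J y *v v)) \<le> c * (KJ + 1) * norm h" by simp
    next
      show "y \<in> cball y (norm h)" by simp
    qed
    then show ?thesis by (simp add: Q_def power2_eq_square algebra_simps)
  qed
  have contg: "continuous_on UNIV g"
    using dg has_derivative_continuous continuous_at_imp_continuous_on by blast
  have "continuous_on (cball 0 R) Q" unfolding Q_def
    by (intro continuous_intros continuous_on_compose2[OF contg]) auto
  then have "compact (Q ` cball 0 R)" by (intro compact_continuous_image) auto
  then obtain B where B: "\<And>h. h \<in> cball 0 R \<Longrightarrow> norm (Q h) \<le> B"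
    using compact_imp_bounded bounded_iff by (metis image_eqI)
  define M where "M = max (c * (KJ + 1)) (B / r\<^sup>2)"
  have "Q h \<le> M * (norm h)\<^sup>2" if "norm h \<le> R" for h
  proof (cases "norm h < r")
    case True
    then show ?thesis using near[OF True] unfolding M_def
      by (meson max.cobounded1 mult_right_mono order_trans zero_le_power2)
  next
    case False
    have "Q h \<le> B" using B[of h] that by (auto simp: Q_def)
    also have "B = (B / r\<^sup>2) * r\<^sup>2" using r by simp
    also have "\<dots> \<le> M * (norm h)\<^sup>2"
    proof (rule mult_mono)
      show "B / r\<^sup>2 \<le> M" by (simp add: M_def)
      show "r\<^sup>2 \<le> (norm h)\<^sup>2" using False r by (intro power_mono) auto
      show "0 \<le> M" using c0 KJ unfolding M_def by (meson le_max_iff_disj zero_le_mult_iff less_le add_pos_pos zero_less_one)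
    qed simp
    finally show ?thesis .
  qed
  then show ?thesis unfolding Q_def by blast
qed

lemma mv_scale: "(A::real^'n^'m) *v (c *\<^sub>R x) = c *\<^sub>R (A *v x)"
  by (rule matrix_vector_mult_scaleR)

lemma aux3: fixes s dt M x :: real assumes "s > 0" "dt > 0"
  shows "(1 / (s/dt)) * (M * (s * x)\<^sup>2) = M * s * dt * x\<^sup>2"
proof -
  have "(1 / (s/dt)) * (M * (s * x)\<^sup>2) = (dt / s) * s * (M * s * x\<^sup>2)" by (simp add: power2_eq_square mult_ac)
  also have "(dt / s) * s = dt" using assms by simp
  finally show ?thesis by (simp add: mult_ac)
qed

lemma eq_split:
  fixes A dA :: "real^'n^'n" and M :: "real^'n^'n" and d y :: "real^'n" and g gh :: "real^'n \<Rightarrow> real^'n"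
  assumes d0: "\<delta> > 0"
  shows "((A + dA) *v d + (1 / \<delta>) *\<^sub>R (gh (y + \<delta> *\<^sub>R d) - g y)) - ((A *v (y+d) + g (y+d)) - (A *v y + g y))
        = dA *v d + (1/\<delta>) *\<^sub>R (gh (y + \<delta> *\<^sub>R d) - g (y + \<delta> *\<^sub>R d)) + (1/\<delta>) *\<^sub>R (g (y + \<delta> *\<^sub>R d) - g y - M *v (\<delta> *\<^sub>R d)) - (g (y + d) - g y - M *v d)"
proof -
  have "M *v (\<delta> *\<^sub>R d) = \<delta> *\<^sub>R (M *v d)" by (rule matrix_vector_mult_scaleR)
  then have "(1/\<delta>) *\<^sub>R (M *v (\<delta> *\<^sub>R d)) = M *v d" using d0 by simp
  moreover have "(A + dA) *v d = A *v d + dA *v d" by (simp add: matrix_vector_mult_add_rdistrib)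
  moreover have "A *v (y+d) = A *v y + A *v d" by (simp add: matrix_vector_right_distrib)
  ultimately show ?thesis by (simp add: scaleR_diff_right)
qed

theorem lemmaA1:
  fixes A :: "real^'n^'n" and g :: "real^'n \<Rightarrow> real^'n" and f :: "real^'n \<Rightarrow> real^'n"
    and y :: "real^'n" and C :: real
  assumes f_def: "f = (\<lambda>x. A *v x + g x)"
    and g_twice: "\<exists>J :: real^'n \<Rightarrow> real^'n^'n.
        (\<forall>x. (g has_derivative (\<lambda>h. J x *v h)) (at x)) \<and> (\<forall>x. J differentiable (at x))"
  shows "\<exists>dt0 > 0. \<exists>K. \<forall>(u::real) (dt::real) (dA::real^'n^'n) (d::real^'n) (gh::real^'n \<Rightarrow> real^'n).
      0 < u \<and> u \<le> 1 \<and> 0 < dt \<and> dt \<le> dt0 \<and> norm d \<le> C * dt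
      \<and> onorm (\<lambda>v. dA *v v) \<le> C * u * onorm (\<lambda>v. A *v v)
      \<and> (\<forall>x. norm (gh x - g x) \<le> C * u)
      \<longrightarrow> (let \<delta> = sqrt u / dt;
               Df = (A + dA) *v d + (1 / \<delta>) *\<^sub>R (gh (y + \<delta> *\<^sub>R d) - g y)
           in norm (Df - (f (y + d) - f y)) \<le> K * (sqrt u * dt + dt\<^sup>2))"
proof -
  obtain J :: "real^'n \<Rightarrow> real^'n^'n" where dg: "\<And>x. (g has_derivative (\<lambda>h. J x *v h)) (at x)"
    and dJ: "\<And>x. J differentiable (at x)" using g_twice by blast
  obtain M0 where M0: "\<And>h. norm h \<le> \<bar>C\<bar> \<Longrightarrow> norm (g (y + h) - g y - J y *v h) \<le> M0 * (norm h)\<^sup>2"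
    using quad_bound[OF dg dJ, where y=y and R="\<bar>C\<bar>"] by blast
  define M where "M = max M0 0"
  have M0': "M \<ge> 0" unfolding M_def by simp
  have Mb: "norm (g (y + h) - g y - J y *v h) \<le> M * (norm h)\<^sup>2" if "norm h \<le> \<bar>C\<bar>" for h
    using M0[OF that] unfolding M_def by (meson max.cobounded1 mult_right_mono order_trans zero_le_power2)
  define opA where "opA = onorm (\<lambda>v. A *v v)"
  have opA0: "opA \<ge> 0" unfolding opA_def by (rule onorm_pos_le) simp
  define K where "K = C\<^sup>2 * opA + \<bar>C\<bar> + 2 * M * C\<^sup>2"
  have main: "norm (((A + dA) *v d + (1 / (sqrt u / dt)) *\<^sub>R (gh (y + (sqrt u / dt) *\<^sub>R d) - g y))
                 - (f (y + d) - f y)) \<le> K * (sqrt u * dt + dt\<^sup>2)"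
    if u0: "0 < u" and u1: "u \<le> 1" and dt0: "0 < dt" and dt1: "dt \<le> 1" and nd: "norm d \<le> C * dt"
      and ndA: "onorm (\<lambda>v. dA *v v) \<le> C * u * onorm (\<lambda>v. A *v v)"
      and ngh: "\<forall>x. norm (gh x - g x) \<le> C * u"
    for u dt dA d gh
  proof -
    define s where "s = sqrt u"
    define \<delta> where "\<delta> = s / dt"
    have s0: "s > 0" using u0 by (simp add: s_def)
    have s1: "s \<le> 1" using u1 by (simp add: s_def)
    have us: "u = s\<^sup>2" using u0 by (simp add: s_def)
    have d0: "\<delta> > 0" using s0 dt0 by (simp add: \<delta>_def)
    have C0: "C \<ge> 0" using nd dt0 by (metis norm_ge_zero order_trans zero_le_mult_iff less_le not_le)
    have nd1: "norm d \<le> \<bar>C\<bar>" using nd dt1 C0 by (metis abs_of_nonneg mult_left_le order_trans dt0 less_le)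
    have ndd: "norm (\<delta> *\<^sub>R d) = s * (norm d / dt)" using s0 dt0 by (simp add: \<delta>_def)
    have ndd1: "norm d / dt \<le> C" using nd dt0 by (simp add: divide_le_eq mult.commute)
    have nd2: "norm (\<delta> *\<^sub>R d) \<le> \<bar>C\<bar>"
    proof -
      have "s * (norm d / dt) \<le> 1 * C" using s1 s0 ndd1 C0 dt0 by (intro mult_mono) auto
      then show ?thesis using ndd C0 by simp
    qed
    define T1 where "T1 = dA *v d"
    define T2 where "T2 = (1/\<delta>) *\<^sub>R (gh (y + \<delta> *\<^sub>R d) - g (y + \<delta> *\<^sub>R d))"
    define T3 where "T3 = (1/\<delta>) *\<^sub>R (g (y + \<delta> *\<^sub>R d) - g y - J y *v (\<delta> *\<^sub>R d))"
    define T4 where "T4 = g (y + d) - g y - J y *v d"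
    have "J y *v (\<delta> *\<^sub>R d) = \<delta> *\<^sub>R (J y *v d)" by (rule mv_scale)
    have eq: "((A + dA) *v d + (1 / \<delta>) *\<^sub>R (gh (y + \<delta> *\<^sub>R d) - g y)) - (f (y + d) - f y)
        = T1 + T2 + T3 - T4"
      unfolding T1_def T2_def T3_def T4_def f_def by (rule eq_split[OF d0])
    have b1: "norm T1 \<le> C\<^sup>2 * opA * (s * dt)"
    proof -
      have "norm T1 \<le> onorm (\<lambda>v. dA *v v) * norm d" unfolding T1_def
        by (rule onorm) simp
      also have "\<dots> \<le> (C * u * opA) * (C * dt)"
        using ndA nd C0 u0 opA0 by (intro mult_mono) (auto simp: opA_def intro!: onorm_pos_le)
      also have "\<dots> \<le> (C * s * opA) * (C * dt)"
      proof -
        have "u \<le> s" using us s0 s1 by (simp add: power2_eq_square mult_left_le_one_le)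
        then show ?thesis using C0 opA0 dt0 by (intro mult_right_mono) (auto intro!: mult_left_mono)
      qed
      also have "\<dots> = C\<^sup>2 * opA * (s * dt)" by (simp add: power2_eq_square mult_ac)
      finally show ?thesis .
    qed
    have b2: "norm T2 \<le> \<bar>C\<bar> * (s * dt)"
    proof -
      have "norm T2 = (dt / s) * norm (gh (y + \<delta> *\<^sub>R d) - g (y + \<delta> *\<^sub>R d))"
        unfolding T2_def using d0 s0 dt0 by (simp add: \<delta>_def)
      also have "\<dots> \<le> (dt / s) * (C * s\<^sup>2)" using ngh us s0 dt0 by (intro mult_left_mono) auto
      finally show ?thesis using s0 C0 by (simp add: power2_eq_square) (simp add: mult_ac)
    qed
    have b3: "norm T3 \<le> M * C\<^sup>2 * (s * dt)"
    proof -
      have "norm T3 = (1/\<delta>) * norm (g (y + \<delta> *\<^sub>R d) - g y - J y *v (\<delta> *\<^sub>R d))"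
        unfolding T3_def using d0 by simp
      also have "\<dots> \<le> (1/\<delta>) * (M * (norm (\<delta> *\<^sub>R d))\<^sup>2)"
        using Mb[OF nd2] d0 by (intro mult_left_mono) auto
      also have "\<dots> = M * s * dt * (norm d / dt)\<^sup>2"
        unfolding ndd by (unfold \<delta>_def, rule aux3[OF s0 dt0])
      also have "\<dots> \<le> M * s * dt * C\<^sup>2"
        using ndd1 M0' s0 dt0 by (intro mult_left_mono power_mono) auto
      also have "\<dots> = M * C\<^sup>2 * (s * dt)" by (simp add: mult_ac)
      finally show ?thesis .
    qed
    have b4: "norm T4 \<le> M * C\<^sup>2 * dt\<^sup>2"
    proof -
      have "norm T4 \<le> M * (norm d)\<^sup>2" unfolding T4_def by (rule Mb[OF nd1])
      also have "\<dots> \<le> M * (C * dt)\<^sup>2" using nd M0' by (intro mult_left_mono power_mono) auto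
      finally show ?thesis by (simp add: power_mult_distrib)
    qed
    have "norm (T1 + T2 + T3 - T4) \<le> norm T1 + norm T2 + norm T3 + norm T4"
    proof -
      have "norm (T1 + T2 + T3 - T4) \<le> norm (T1 + T2 + T3) + norm T4" by (rule norm_triangle_ineq4)
      moreover have "norm (T1 + T2 + T3) \<le> norm (T1 + T2) + norm T3" by (rule norm_triangle_ineq)
      moreover have "norm (T1 + T2) \<le> norm T1 + norm T2" by (rule norm_triangle_ineq)
      ultimately show ?thesis by linarith
    qed
    also have "\<dots> \<le> C\<^sup>2 * opA * (s * dt) + \<bar>C\<bar> * (s * dt) + M * C\<^sup>2 * (s * dt) + M * C\<^sup>2 * dt\<^sup>2"
      using b1 b2 b3 b4 by linarith
    also have "\<dots> = (C\<^sup>2 * opA + \<bar>C\<bar> + M * C\<^sup>2) * (s * dt) + M * C\<^sup>2 * dt\<^sup>2"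
      by (simp only: distrib_right)
    also have "\<dots> \<le> K * (s * dt + dt\<^sup>2)"
    proof -
      have "0 \<le> M * C\<^sup>2 * (s * dt)" using M0' s0 dt0 by simp
      moreover have "0 \<le> (C\<^sup>2 * opA + \<bar>C\<bar>) * dt\<^sup>2 + M * C\<^sup>2 * dt\<^sup>2" using M0' opA0 by simp
      moreover have "K * (s * dt + dt\<^sup>2) = ((C\<^sup>2 * opA + \<bar>C\<bar> + M * C\<^sup>2) * (s * dt) + M * C\<^sup>2 * dt\<^sup>2)
          + (M * C\<^sup>2 * (s * dt) + ((C\<^sup>2 * opA + \<bar>C\<bar>) * dt\<^sup>2 + M * C\<^sup>2 * dt\<^sup>2))"
        unfolding K_def by algebra
      ultimately show ?thesis by linarith
    qed
    finally show ?thesis using eq by (simp add: s_def \<delta>_def)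
  qed
  show ?thesis
    apply (rule exI[of _ 1])
    apply (simp only: Let_def)
    apply (intro conjI zero_less_one exI[of _ K] allI impI)
    apply (elim conjE)
    apply (rule main)
          apply assumption+
    done
qed

end
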